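(* Let $R$ be a commutative ring with identity, let $S$ and $T$ be multiplicative subsets of $R$, and let $M$ be a unitary $R$-module. Then: (1) If $A$ is an $R_T$-submodule of $M_T$, then $A=L_T$ for some $R$-submodule $L$ of $M$. (2) If $M$ is an $S$-Noetherian $R$-module, then $M_T$ is an $S_T$-Noetherian $R_T$-module. Furthermore, if $T$ consists of regular elements of $R$, then $M_T$ is an $S$-Noetherian $R_T$-module.
   Context: $S_T=\{s/t\mid s\in S,\ t\in T\}$, a multiplicative subset of $R_T$. A submodule $L$ of a module $M$ is $S$-finite if there exist $s\in S$ and a finitely generated submodule $F$ of $M$ with $Ls\subseteq F\subseteq L$; $M$ is $S$-Noetherian if every submodule of $M$ is $S$-finite. When $T$ consists of regular elements, $R$ is regarded as a subring of $R_T$, so $S$ is a multiplicative subset of $R_T$. *)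

theory Defs
  imports Complex_Main
begin

text \<open>A module is described by a set of scalars Rc, a carrier Mc, addition,
  zero and scalar multiplication.  This lets us speak uniformly about the
  R-module M and the R_T-module M_T (whose elements are equivalence classes).\<close>

definition gsubmod ::
  "'s set \<Rightarrow> 'v set \<Rightarrow> ('v \<Rightarrow> 'v \<Rightarrow> 'v) \<Rightarrow> 'v \<Rightarrow> ('s \<Rightarrow> 'v \<Rightarrow> 'v) \<Rightarrow> 'v set \<Rightarrow> bool" where
  "gsubmod Rc Mc add zero smul N \<longleftrightarrow>
     N \<subseteq> Mc \<and> zero \<in> N \<and> (\<forall>x\<in>N. \<forall>y\<in>N. add x y \<in> N) \<and> (\<forall>r\<in>Rc. \<forall>x\<in>N. smul r x \<in> N)"

definition gspan ::
  "'s set \<Rightarrow> 'v set \<Rightarrow> ('v \<Rightarrow> 'v \<Rightarrow> 'v) \<Rightarrow> 'v \<Rightarrow> ('s \<Rightarrow> 'v \<Rightarrow> 'v) \<Rightarrow> 'v set \<Rightarrow> 'v set" where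
  "gspan Rc Mc add zero smul G = \<Inter>{N. gsubmod Rc Mc add zero smul N \<and> G \<subseteq> N}"

definition gfin_gen ::
  "'s set \<Rightarrow> 'v set \<Rightarrow> ('v \<Rightarrow> 'v \<Rightarrow> 'v) \<Rightarrow> 'v \<Rightarrow> ('s \<Rightarrow> 'v \<Rightarrow> 'v) \<Rightarrow> 'v set \<Rightarrow> bool" where
  "gfin_gen Rc Mc add zero smul F \<longleftrightarrow>
     (\<exists>G. finite G \<and> G \<subseteq> Mc \<and> F = gspan Rc Mc add zero smul G)"

definition gS_finite ::
  "'s set \<Rightarrow> 'v set \<Rightarrow> ('v \<Rightarrow> 'v \<Rightarrow> 'v) \<Rightarrow> 'v \<Rightarrow> ('s \<Rightarrow> 'v \<Rightarrow> 'v) \<Rightarrow> 's set \<Rightarrow> 'v set \<Rightarrow> bool" where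
  "gS_finite Rc Mc add zero smul S L \<longleftrightarrow>
     (\<exists>s\<in>S. \<exists>F. gfin_gen Rc Mc add zero smul F \<and> smul s ` L \<subseteq> F \<and> F \<subseteq> L)"

definition gS_noetherian ::
  "'s set \<Rightarrow> 'v set \<Rightarrow> ('v \<Rightarrow> 'v \<Rightarrow> 'v) \<Rightarrow> 'v \<Rightarrow> ('s \<Rightarrow> 'v \<Rightarrow> 'v) \<Rightarrow> 's set \<Rightarrow> bool" where
  "gS_noetherian Rc Mc add zero smul S \<longleftrightarrow>
     (\<forall>L. gsubmod Rc Mc add zero smul L \<longrightarrow> gS_finite Rc Mc add zero smul S L)"

definition mult_subset :: "'r::comm_ring_1 set \<Rightarrow> bool" where
  "mult_subset T \<longleftrightarrow> 1 \<in> T \<and> (\<forall>a\<in>T. \<forall>b\<in>T. a * b \<in> T)"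

definition loc_rel :: "('r::comm_ring_1 \<Rightarrow> 'm::ab_group_add \<Rightarrow> 'm) \<Rightarrow> 'r set \<Rightarrow> (('m \<times> 'r) \<times> ('m \<times> 'r)) set" where
  "loc_rel scale T = {((m, t), (m', t')). t \<in> T \<and> t' \<in> T \<and>
       (\<exists>u\<in>T. scale u (scale t' m - scale t m') = 0)}"

definition frac :: "('r::comm_ring_1 \<Rightarrow> 'm::ab_group_add \<Rightarrow> 'm) \<Rightarrow> 'r set \<Rightarrow> 'm \<Rightarrow> 'r \<Rightarrow> ('m \<times> 'r) set" where
  "frac scale T m t = loc_rel scale T `` {(m, t)}"

definition loc_mod :: "('r::comm_ring_1 \<Rightarrow> 'm::ab_group_add \<Rightarrow> 'm) \<Rightarrow> 'r set \<Rightarrow> ('m \<times> 'r) set set" where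
  "loc_mod scale T = {frac scale T m t | m t. t \<in> T}"

definition loc_zero :: "('r::comm_ring_1 \<Rightarrow> 'm::ab_group_add \<Rightarrow> 'm) \<Rightarrow> 'r set \<Rightarrow> ('m \<times> 'r) set" where
  "loc_zero scale T = frac scale T 0 1"

definition loc_add :: "('r::comm_ring_1 \<Rightarrow> 'm::ab_group_add \<Rightarrow> 'm) \<Rightarrow> 'r set \<Rightarrow>
    ('m \<times> 'r) set \<Rightarrow> ('m \<times> 'r) set \<Rightarrow> ('m \<times> 'r) set" where
  "loc_add scale T X Y =
     (let (m, t) = (SOME p. p \<in> X); (m', t') = (SOME p. p \<in> Y)
      in frac scale T (scale t' m + scale t m') (t * t'))"

abbreviation loc_ring :: "'r::comm_ring_1 set \<Rightarrow> ('r \<times> 'r) set set" where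
  "loc_ring T \<equiv> loc_mod (*) T"

abbreviation rfrac :: "'r::comm_ring_1 set \<Rightarrow> 'r \<Rightarrow> 'r \<Rightarrow> ('r \<times> 'r) set" where
  "rfrac T r t \<equiv> frac (*) T r t"

definition loc_smul :: "('r::comm_ring_1 \<Rightarrow> 'm::ab_group_add \<Rightarrow> 'm) \<Rightarrow> 'r set \<Rightarrow>
    ('r \<times> 'r) set \<Rightarrow> ('m \<times> 'r) set \<Rightarrow> ('m \<times> 'r) set" where
  "loc_smul scale T x X =
     (let (r, s) = (SOME p. p \<in> x); (m, t) = (SOME p. p \<in> X)
      in frac scale T (scale r m) (s * t))"

definition loc_sub :: "('r::comm_ring_1 \<Rightarrow> 'm::ab_group_add \<Rightarrow> 'm) \<Rightarrow> 'r set \<Rightarrow> 'm set \<Rightarrow> ('m \<times> 'r) set set" where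
  "loc_sub scale T L = {frac scale T m t | m t. m \<in> L \<and> t \<in> T}"

definition loc_mset :: "'r::comm_ring_1 set \<Rightarrow> 'r set \<Rightarrow> ('r \<times> 'r) set set" where
  "loc_mset S T = {rfrac T s t | s t. s \<in> S \<and> t \<in> T}"

end

theory Submission
  imports Defs
begin

lemma module_times: "module ((*)::'a::comm_ring_1\<Rightarrow>'a\<Rightarrow>'a)"
  by unfold_locales (simp_all add: algebra_simps)

lemma ms_mult: "mult_subset T \<Longrightarrow> a \<in> T \<Longrightarrow> b \<in> T \<Longrightarrow> a * b \<in> T"
  by (simp add: mult_subset_def)

lemma ms_one: "mult_subset T \<Longrightarrow> 1 \<in> T"
  by (simp add: mult_subset_def)

lemma gspan_sub: "gsubmod Rc Mc add zero smul N \<Longrightarrow> G \<subseteq> N \<Longrightarrow> gspan Rc Mc add zero smul G \<subseteq> N"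
  unfolding gspan_def by blast

lemma gspan_gen: "G \<subseteq> gspan Rc Mc add zero smul G"
  unfolding gspan_def by blast

lemma gspan_zero: "zero \<in> gspan Rc Mc add zero smul G"
  unfolding gspan_def gsubmod_def by blast

lemma gspan_add: "x \<in> gspan Rc Mc add zero smul G \<Longrightarrow> y \<in> gspan Rc Mc add zero smul G
   \<Longrightarrow> add x y \<in> gspan Rc Mc add zero smul G"
  unfolding gspan_def gsubmod_def by blast

lemma gspan_smul: "x \<in> gspan Rc Mc add zero smul G \<Longrightarrow> r \<in> Rc
   \<Longrightarrow> smul r x \<in> gspan Rc Mc add zero smul G"
  unfolding gspan_def gsubmod_def by blast

context module
begin

lemma rel_iff: "((m,t),(m',t')) \<in> loc_rel scale T \<longleftrightarrow>
   t\<in>T \<and> t'\<in>T \<and> (\<exists>u\<in>T. scale (u*t') m = scale (u*t) m')"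
  by (auto simp: loc_rel_def scale_right_diff_distrib)

lemma rel_refl: "mult_subset T \<Longrightarrow> t\<in>T \<Longrightarrow> ((m,t),(m,t)) \<in> loc_rel scale T"
  unfolding rel_iff by (auto intro: ms_one)

lemma rel_sym: "((a,s),(b,t)) \<in> loc_rel scale T \<Longrightarrow> ((b,t),(a,s)) \<in> loc_rel scale T"
  unfolding rel_iff by metis

lemma rel_trans:
  assumes T: "mult_subset T" and 1: "((a,t1),(b,t2)) \<in> loc_rel scale T"
    and 2: "((b,t2),(c,t3)) \<in> loc_rel scale T"
  shows "((a,t1),(c,t3)) \<in> loc_rel scale T"
proof -
  from 1 obtain u where u: "u\<in>T" "scale (u*t2) a = scale (u*t1) b" "t1\<in>T" "t2\<in>T"
    unfolding rel_iff by blast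
  from 2 obtain v where v: "v\<in>T" "scale (v*t3) b = scale (v*t2) c" "t3\<in>T"
    unfolding rel_iff by blast
  have w: "u*v*t2 \<in> T" using u v T by (simp add: ms_mult)
  have "scale (u*v*t2*t3) a = scale (v*t3) (scale (u*t2) a)" by (simp add: mult_ac)
  also have "\<dots> = scale (v*t3) (scale (u*t1) b)" using u by simp
  also have "\<dots> = scale (u*t1) (scale (v*t3) b)" by (simp add: mult_ac)
  also have "\<dots> = scale (u*t1) (scale (v*t2) c)" using v by simp
  also have "\<dots> = scale (u*v*t2*t1) c" by (simp add: mult_ac)
  finally show ?thesis unfolding rel_iff using u v w by blast
qed

lemma frac_mem: "p \<in> frac scale T m t \<longleftrightarrow> ((m,t),p) \<in> loc_rel scale T"
  by (simp add: frac_def)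

lemma frac_eq:
  assumes T: "mult_subset T" and "t\<in>T" "t'\<in>T"
  shows "frac scale T m t = frac scale T m' t' \<longleftrightarrow> ((m,t),(m',t')) \<in> loc_rel scale T"
proof
  assume "frac scale T m t = frac scale T m' t'"
  moreover have "(m',t') \<in> frac scale T m' t'" using rel_refl[OF T assms(3)] frac_mem by blast
  ultimately show "((m,t),(m',t')) \<in> loc_rel scale T" using frac_mem by blast
next
  assume r: "((m,t),(m',t')) \<in> loc_rel scale T"
  show "frac scale T m t = frac scale T m' t'"
  proof (rule set_eqI)
    fix p :: "'b \<times> 'a"
    obtain a b where p: "p = (a,b)" by (cases p)
    show "p \<in> frac scale T m t \<longleftrightarrow> p \<in> frac scale T m' t'"
      unfolding p frac_mem using r rel_sym rel_trans[OF T] by meson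
  qed
qed

lemma frac_some_rep:
  assumes T: "mult_subset T" and t: "t\<in>T" and e: "(SOME p. p \<in> frac scale T m t) = (a,b)"
  shows "b\<in>T \<and> (\<exists>u\<in>T. scale (u*b) m = scale (u*t) a)"
proof -
  have "(m,t) \<in> frac scale T m t" using rel_refl[OF T t] frac_mem by blast
  hence "(SOME p. p \<in> frac scale T m t) \<in> frac scale T m t" by (rule someI)
  hence "((m,t),(a,b)) \<in> loc_rel scale T" using e frac_mem by simp
  thus ?thesis unfolding rel_iff by blast
qed

lemma loc_add_frac:
  assumes T: "mult_subset T" and t: "t\<in>T" "t'\<in>T"
  shows "loc_add scale T (frac scale T m t) (frac scale T m' t') =
         frac scale T (scale t' m + scale t m') (t*t')"
proof -
  obtain a b where ab: "(SOME p. p \<in> frac scale T m t) = (a,b)" by fastforce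
  obtain a' b' where ab': "(SOME p. p \<in> frac scale T m' t') = (a',b')" by fastforce
  from frac_some_rep[OF T t(1) ab] obtain u where u: "b\<in>T" "u\<in>T" "scale (u*b) m = scale (u*t) a"
    by blast
  from frac_some_rep[OF T t(2) ab'] obtain v where v: "b'\<in>T" "v\<in>T" "scale (v*b') m' = scale (v*t') a'"
    by blast
  have "loc_add scale T (frac scale T m t) (frac scale T m' t') = frac scale T (scale b' a + scale b a') (b*b')"
    by (simp add: loc_add_def ab ab')
  also have "\<dots> = frac scale T (scale t' m + scale t m') (t*t')"
  proof (subst frac_eq[OF T])
    show "b*b' \<in> T" "t*t' \<in> T" using u v t T by (simp_all add: ms_mult)
    have "scale (u*v*(t*t')) (scale b' a + scale b a') =
          scale (v*t'*b') (scale (u*t) a) + scale (u*t*b) (scale (v*t') a')"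
      by (simp add: scale_right_distrib mult_ac)
    also have "\<dots> = scale (v*t'*b') (scale (u*b) m) + scale (u*t*b) (scale (v*b') m')"
      using u v by simp
    also have "\<dots> = scale (u*v*(b*b')) (scale t' m + scale t m')"
      by (simp add: scale_right_distrib mult_ac)
    finally show "((scale b' a + scale b a', b * b'), scale t' m + scale t m', t * t') \<in> loc_rel scale T"
      unfolding rel_iff using u v t T \<open>b*b' \<in> T\<close> \<open>t*t' \<in> T\<close> by (metis ms_mult)
  qed
  finally show ?thesis .
qed

lemma loc_smul_frac:
  assumes T: "mult_subset T" and t: "q\<in>T" "t\<in>T"
  shows "loc_smul scale T (rfrac T r q) (frac scale T m t) = frac scale T (scale r m) (q*t)"
proof -
  obtain c d where cd: "(SOME p. p \<in> rfrac T r q) = (c,d)" by fastforce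
  obtain a b where ab: "(SOME p. p \<in> frac scale T m t) = (a,b)" by fastforce
  from module.frac_some_rep[OF module_times T t(1) cd] obtain u where
    u: "d\<in>T" "u\<in>T" "u*d*r = u*q*c" by blast
  from frac_some_rep[OF T t(2) ab] obtain v where v: "b\<in>T" "v\<in>T" "scale (v*b) m = scale (v*t) a"
    by blast
  have "loc_smul scale T (rfrac T r q) (frac scale T m t) = frac scale T (scale c a) (d*b)"
    by (simp add: loc_smul_def ab cd)
  also have "\<dots> = frac scale T (scale r m) (q*t)"
  proof (subst frac_eq[OF T])
    show "d*b \<in> T" "q*t \<in> T" using u v t T by (simp_all add: ms_mult)
    have "scale (u*v*(q*t)) (scale c a) = scale (u*q*c) (scale (v*t) a)"
      by (simp add: mult_ac)
    also have "\<dots> = scale (u*d*r) (scale (v*b) m)"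
      using u v by simp
    also have "\<dots> = scale (u*v*(d*b)) (scale r m)"
      by (simp add: mult_ac)
    finally show "((scale c a, d*b), scale r m, q*t) \<in> loc_rel scale T"
      unfolding rel_iff using u v t T \<open>d*b \<in> T\<close> \<open>q*t \<in> T\<close> by (metis ms_mult)
  qed
  finally show ?thesis .
qed

lemma loc_mod_cases: "X \<in> loc_mod scale T \<Longrightarrow> (\<And>m t. X = frac scale T m t \<Longrightarrow> t\<in>T \<Longrightarrow> P) \<Longrightarrow> P"
  unfolding loc_mod_def by blast

lemma frac_in_loc_mod: "t\<in>T \<Longrightarrow> frac scale T m t \<in> loc_mod scale T"
  unfolding loc_mod_def by blast

lemma frac_t_1:
  assumes T: "mult_subset T" and t: "t\<in>T"
  shows "loc_smul scale T (rfrac T t 1) (frac scale T m t) = frac scale T m 1"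
proof -
  have "loc_smul scale T (rfrac T t 1) (frac scale T m t) = frac scale T (scale t m) (1*t)"
    by (rule loc_smul_frac[OF T ms_one[OF T] t])
  also have "\<dots> = frac scale T m 1"
    using T t ms_one[OF T] by (subst frac_eq) (auto simp: rel_iff)
  finally show ?thesis .
qed

lemma part1:
  assumes T: "mult_subset T"
    and A: "gsubmod (loc_ring T) (loc_mod scale T) (loc_add scale T) (loc_zero scale T) (loc_smul scale T) A"
  shows "subspace {m. frac scale T m 1 \<in> A} \<and> A = loc_sub scale T {m. frac scale T m 1 \<in> A}"
proof -
  have one: "1 \<in> T" using ms_one[OF T] .
  have Asub: "A \<subseteq> loc_mod scale T" and A0: "loc_zero scale T \<in> A"
    and Aadd: "\<And>x y. x\<in>A \<Longrightarrow> y\<in>A \<Longrightarrow> loc_add scale T x y \<in> A"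
    and Asm: "\<And>r x. r \<in> loc_ring T \<Longrightarrow> x\<in>A \<Longrightarrow> loc_smul scale T r x \<in> A"
    using A unfolding gsubmod_def by blast+
  have "subspace {m. frac scale T m 1 \<in> A}"
  proof (rule subspaceI)
    show "0 \<in> {m. frac scale T m 1 \<in> A}" using A0 by (simp add: loc_zero_def)
  next
    fix x y assume "x \<in> {m. frac scale T m 1 \<in> A}" "y \<in> {m. frac scale T m 1 \<in> A}"
    hence "loc_add scale T (frac scale T x 1) (frac scale T y 1) \<in> A" using Aadd by blast
    thus "x + y \<in> {m. frac scale T m 1 \<in> A}" using loc_add_frac[OF T one one] by (simp add: add.commute)
  next
    fix c x assume "x \<in> {m. frac scale T m 1 \<in> A}"
    hence "loc_smul scale T (rfrac T c 1) (frac scale T x 1) \<in> A"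
      using Asm module.frac_in_loc_mod[OF module_times one] by blast
    thus "scale c x \<in> {m. frac scale T m 1 \<in> A}" using loc_smul_frac[OF T one one] by simp
  qed
  moreover have "A = loc_sub scale T {m. frac scale T m 1 \<in> A}"
  proof
    show "A \<subseteq> loc_sub scale T {m. frac scale T m 1 \<in> A}"
    proof
      fix X assume X: "X \<in> A"
      then obtain m t where m: "X = frac scale T m t" "t\<in>T" using Asub loc_mod_cases by blast
      have "loc_smul scale T (rfrac T t 1) X \<in> A"
        using Asm X module.frac_in_loc_mod[OF module_times one] by blast
      hence "frac scale T m 1 \<in> A" using frac_t_1[OF T m(2)] m by simp
      thus "X \<in> loc_sub scale T {m. frac scale T m 1 \<in> A}" unfolding loc_sub_def using m by blast
    qed
  next
    show "loc_sub scale T {m. frac scale T m 1 \<in> A} \<subseteq> A"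
    proof
      fix X assume "X \<in> loc_sub scale T {m. frac scale T m 1 \<in> A}"
      then obtain m t where m: "X = frac scale T m t" "t\<in>T" "frac scale T m 1 \<in> A"
        unfolding loc_sub_def by blast
      have "loc_smul scale T (rfrac T 1 t) (frac scale T m 1) \<in> A"
        using Asm m module.frac_in_loc_mod[OF module_times m(2)] by blast
      thus "X \<in> A" using loc_smul_frac[OF T m(2) one] m by simp
    qed
  qed
  ultimately show ?thesis ..
qed

lemma part2:
  assumes T: "mult_subset T"
    and N: "gS_noetherian UNIV UNIV (+) 0 scale S"
    and L: "gsubmod (loc_ring T) (loc_mod scale T) (loc_add scale T) (loc_zero scale T) (loc_smul scale T) L"
  shows "\<exists>s\<in>S. \<exists>F. gfin_gen (loc_ring T) (loc_mod scale T) (loc_add scale T) (loc_zero scale T) (loc_smul scale T) F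
     \<and> loc_smul scale T (rfrac T s 1) ` L \<subseteq> F \<and> F \<subseteq> L"
proof -
  have one: "1 \<in> T" using ms_one[OF T] .
  define N0 where "N0 = {m. frac scale T m 1 \<in> L}"
  have p1: "subspace N0" "L = loc_sub scale T N0" using part1[OF T L] unfolding N0_def by auto
  have "gsubmod UNIV UNIV (+) 0 scale N0" using p1(1) unfolding subspace_def gsubmod_def by blast
  then obtain s F0 where s: "s\<in>S" "gfin_gen UNIV UNIV (+) 0 scale F0" "scale s ` N0 \<subseteq> F0" "F0 \<subseteq> N0"
    using N unfolding gS_noetherian_def gS_finite_def by blast
  then obtain G where G: "finite G" "F0 = gspan UNIV UNIV (+) 0 scale G" unfolding gfin_gen_def by blast
  define G' where "G' = (\<lambda>g. frac scale T g 1) ` G"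
  define F where "F = gspan (loc_ring T) (loc_mod scale T) (loc_add scale T) (loc_zero scale T) (loc_smul scale T) G'"
  have G'sub: "G' \<subseteq> loc_mod scale T" unfolding G'_def using frac_in_loc_mod[OF one] by blast
  have fg: "gfin_gen (loc_ring T) (loc_mod scale T) (loc_add scale T) (loc_zero scale T) (loc_smul scale T) F"
  proof -
    have "finite G'" unfolding G'_def using G(1) by simp
    thus ?thesis unfolding gfin_gen_def F_def using G'sub by (intro exI[of _ G']) simp
  qed
  have GF0: "G \<subseteq> F0" unfolding G(2) by (rule gspan_gen)
  have G'L: "G' \<subseteq> L" 
  proof
    fix x assume "x \<in> G'"
    then obtain g where g: "g \<in> G" "x = frac scale T g 1" unfolding G'_def by blast
    hence "g \<in> N0" using GF0 s(4) by blast
    thus "x \<in> L" using g unfolding N0_def by simp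
  qed
  have FL: "F \<subseteq> L" unfolding F_def by (rule gspan_sub[OF L G'L])
  define P where "P = {x. frac scale T x 1 \<in> F}"
  have "gsubmod UNIV UNIV (+) 0 scale P"
    unfolding gsubmod_def
  proof (intro conjI ballI)
    show "P \<subseteq> UNIV" by simp
    have "loc_zero scale T \<in> F" unfolding F_def by (rule gspan_zero)
    thus "0 \<in> P" unfolding P_def loc_zero_def by simp
  next
    fix x y assume "x \<in> P" "y \<in> P"
    hence "frac scale T x 1 \<in> F" "frac scale T y 1 \<in> F" unfolding P_def by auto
    hence "loc_add scale T (frac scale T x 1) (frac scale T y 1) \<in> F"
      unfolding F_def by (rule gspan_add)
    thus "x + y \<in> P" unfolding P_def using loc_add_frac[OF T one one] by (simp add: add.commute)
  next
    fix c x assume "x \<in> P"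
    hence "frac scale T x 1 \<in> F" unfolding P_def by auto
    hence "loc_smul scale T (rfrac T c 1) (frac scale T x 1) \<in> F"
      unfolding F_def by (rule gspan_smul) (rule module.frac_in_loc_mod[OF module_times one])
    thus "scale c x \<in> P" unfolding P_def using loc_smul_frac[OF T one one] by simp
  qed
  moreover have "G \<subseteq> P"
  proof
    fix g assume "g \<in> G"
    hence "frac scale T g 1 \<in> G'" unfolding G'_def by blast
    hence "frac scale T g 1 \<in> F" unfolding F_def by (rule gspan_gen[THEN subsetD])
    thus "g \<in> P" unfolding P_def by simp
  qed
  ultimately have F0P: "F0 \<subseteq> P" unfolding G(2) by (rule gspan_sub)
  have "loc_smul scale T (rfrac T s 1) ` L \<subseteq> F"
  proof
    fix Y assume "Y \<in> loc_smul scale T (rfrac T s 1) ` L"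
    then obtain X where X: "X \<in> L" "Y = loc_smul scale T (rfrac T s 1) X" by blast
    have "X \<in> loc_sub scale T N0" using X(1) p1(2) by simp
    then obtain m t where m: "X = frac scale T m t" "t\<in>T" "m \<in> N0"
      unfolding loc_sub_def by blast
    have "scale s m \<in> P" using m(3) s(3) F0P by blast
    hence "frac scale T (scale s m) 1 \<in> F" unfolding P_def by blast
    hence "loc_smul scale T (rfrac T 1 t) (frac scale T (scale s m) 1) \<in> F"
      unfolding F_def by (rule gspan_smul) (rule module.frac_in_loc_mod[OF module_times m(2)])
    moreover have "loc_smul scale T (rfrac T 1 t) (frac scale T (scale s m) 1) = Y"
      using X m loc_smul_frac[OF T one m(2)] loc_smul_frac[OF T m(2) one] by simp
    ultimately show "Y \<in> F" by simp
  qed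
  thus ?thesis using s(1) fg FL by blast
qed

end

theorem lemma2p1:
  fixes scale :: "'r::comm_ring_1 \<Rightarrow> 'm::ab_group_add \<Rightarrow> 'm"
    and S T :: "'r set"
  assumes "module scale"
    and "mult_subset S"
    and "mult_subset T"
  shows "(\<forall>A. gsubmod (loc_ring T) (loc_mod scale T) (loc_add scale T) (loc_zero scale T)
                 (loc_smul scale T) A
            \<longrightarrow> (\<exists>L. module.subspace scale L \<and> A = loc_sub scale T L))
         \<and> (gS_noetherian UNIV UNIV (+) 0 scale S \<longrightarrow>
              gS_noetherian (loc_ring T) (loc_mod scale T) (loc_add scale T) (loc_zero scale T)
                (loc_smul scale T) (loc_mset S T)
              \<and> ((\<forall>t\<in>T. \<forall>r. t * r = 0 \<longrightarrow> r = 0) \<longrightarrow>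
                   gS_noetherian (loc_ring T) (loc_mod scale T) (loc_add scale T) (loc_zero scale T)
                     (loc_smul scale T) ((\<lambda>s. rfrac T s 1) ` S)))"
proof -
  interpret module scale by (rule assms(1))
  have one: "1 \<in> T" using ms_one[OF assms(3)] .
  have P1: "\<forall>A. gsubmod (loc_ring T) (loc_mod scale T) (loc_add scale T) (loc_zero scale T)
                 (loc_smul scale T) A
            \<longrightarrow> (\<exists>L. subspace L \<and> A = loc_sub scale T L)"
    using part1[OF assms(3)] by blast
  have P2: "gS_noetherian (loc_ring T) (loc_mod scale T) (loc_add scale T) (loc_zero scale T)
                (loc_smul scale T) (loc_mset S T)
              \<and> gS_noetherian (loc_ring T) (loc_mod scale T) (loc_add scale T) (loc_zero scale T)
                     (loc_smul scale T) ((\<lambda>s. rfrac T s 1) ` S)"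
    if N: "gS_noetherian UNIV UNIV (+) 0 scale S"
  proof -
    have "\<And>s. s \<in> S \<Longrightarrow> rfrac T s 1 \<in> loc_mset S T" unfolding loc_mset_def using one by blast
    thus ?thesis unfolding gS_noetherian_def gS_finite_def
      using part2[OF assms(3) N] by (meson image_eqI)
  qed
  show ?thesis using P1 P2 by blast
qed

end
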